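(* Let $p,q$ be coprime positive integers with $q\ge 2$. Let $(F_n)_{n\ge0}$ and $(G_n)_{n\ge0}$ be sequences of rational numbers, neither identically zero, each satisfying $X_n=\frac{p}{q}X_{n-1}-X_{n-2}$ for all $n\ge2$. Write $F_n=\frac{f_n}{f_n'}$ and $G_n=\frac{g_n}{g_n'}$ in reduced form. If $F_0G_1-F_1G_0\neq 0$, then $\gcd(f_n,g_n)$ is bounded independently of $n$. *)

theory Defs
  imports Complex_Main
begin

definition num_of :: "rat \<Rightarrow> int" where
  "num_of x = fst (quotient_of x)"

end

theory Submission
  imports Defs
begin


fun cc :: "int \<Rightarrow> int \<Rightarrow> nat \<Rightarrow> int" where
  "cc p q 0 = 0" | "cc p q (Suc 0) = 1"
| "cc p q (Suc (Suc n)) = p * cc p q (Suc n) - q^2 * cc p q n"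

lemma cop_sub: "coprime b (a - b * k) \<longleftrightarrow> coprime b (a::int)"
proof -
  have "a - b*k = (-k)*b + a" by simp
  then have "gcd b (a - b * k) = gcd b a" by (simp only: gcd_add_mult)
  then show ?thesis by (simp add: coprime_iff_gcd_eq_1)
qed

lemma cc_cop:
  assumes "coprime p q"
  shows "coprime (cc p q (Suc n)) q \<and> coprime (cc p q (Suc n)) (cc p q n)"
proof (induction n)
  case 0 then show ?case by simp
next
  case (Suc n)
  have e: "cc p q (Suc (Suc n)) = p * cc p q (Suc n) - q * (q * cc p q n)"
    by (simp add: power2_eq_square)
  have a: "coprime q (p * cc p q (Suc n))"
    using Suc assms by (simp add: coprime_commute)
  have b: "coprime (cc p q (Suc (Suc n))) q"
    using a cop_sub[of q "p * cc p q (Suc n)" "q * cc p q n"] e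
    by (metis coprime_commute)
  have e2: "cc p q (Suc (Suc n)) = cc p q (Suc n) * p - cc p q (Suc n) * 0 - q^2 * cc p q n"
    by simp
  have "coprime (cc p q (Suc n)) (q^2 * cc p q n)"
    using Suc by (simp add: coprime_commute)
  then have "coprime (cc p q (Suc n)) (q^2 * cc p q n - cc p q (Suc n) * p)"
    using cop_sub[of "cc p q (Suc n)" "q^2 * cc p q n" p] by simp
  then have "coprime (cc p q (Suc n)) (cc p q (Suc (Suc n)))"
    by (metis coprime_minus_right_iff e2 minus_diff_eq mult_zero_right diff_zero)
  then show ?case using b by (simp add: coprime_commute)
qed

definition uu :: "int \<Rightarrow> int \<Rightarrow> nat \<Rightarrow> rat" where
  "uu p q n = of_int (cc p q n) * of_int q / of_int q ^ n"

lemma uu_rec: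
  assumes "q \<noteq> 0"
  shows "uu p q (Suc (Suc n)) = (of_int p / of_int q) * uu p q (Suc n) - uu p q n"
  using assms by (simp add: uu_def field_simps power2_eq_square)

lemma uu01: "q \<noteq> 0 \<Longrightarrow> uu p q 0 = 0 \<and> uu p q 1 = 1"
  by (simp add: uu_def)

lemma rep:
  fixes F :: "nat \<Rightarrow> rat"
  assumes q: "q \<noteq> 0"
    and rec: "\<And>n. F (n + 2) = (of_int p / of_int q) * F (n + 1) - F n"
  shows "F (Suc n) = F 1 * uu p q (Suc n) - F 0 * uu p q n
       \<and> F (Suc (Suc n)) = F 1 * uu p q (Suc (Suc n)) - F 0 * uu p q (Suc n)"
proof (induction n)
  case 0
  have "F (Suc (Suc 0)) = (of_int p / of_int q) * F (Suc 0) - F 0" using rec[of 0]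
    by (simp add: numeral_2_eq_2)
  moreover have "uu p q (Suc (Suc 0)) = of_int p / of_int q" using uu_rec[OF q, of p 0] uu01[OF q] 
    by simp
  ultimately show ?case using uu01[OF q, of p] by simp
next
  case (Suc n)
  have "F (Suc (Suc (Suc n))) = (of_int p / of_int q) * F (Suc (Suc n)) - F (Suc n)"
    using rec[of "Suc n"] by (simp add: numeral_2_eq_2)
  also have "\<dots> = (of_int p / of_int q) * (F 1 * uu p q (Suc (Suc n)) - F 0 * uu p q (Suc n))
      - (F 1 * uu p q (Suc n) - F 0 * uu p q n)"
    using Suc by simp
  also have "\<dots> = F 1 * ((of_int p / of_int q) * uu p q (Suc (Suc n)) - uu p q (Suc n))
      - F 0 * ((of_int p / of_int q) * uu p q (Suc n) - uu p q n)"
    by (simp add: algebra_simps)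
  also have "\<dots> = F 1 * uu p q (Suc (Suc (Suc n))) - F 0 * uu p q (Suc (Suc n))"
    using uu_rec[OF q, of p "Suc n"] uu_rec[OF q, of p n] by simp
  finally show ?case using Suc by simp
qed


lemma clear_den:
  fixes g g' f f' a0 a0' b0 b0' a1' b1' q c N :: rat
  assumes "g' \<noteq> 0" "f' \<noteq> 0" "a0' \<noteq> 0" "b0' \<noteq> 0" "a1' \<noteq> 0" "b1' \<noteq> 0" "q \<noteq> 0"
    and "g/g' * (a0/a0') - f/f' * (b0/b0') = c*q/q^k * (N/(a0'*a1'*b0'*b1'))"
  shows "q^k * (g*f'*a0*b0' - f*g'*b0*a0') * a1' * b1' = q*c*N*f'*g'"
proof -
  have "q^k \<noteq> 0" using assms by simp
  then show ?thesis using assms(1-7) assms(8)[symmetric] by (simp add: field_simps)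
qed

lemma WA:
  fixes F G :: "nat \<Rightarrow> rat"
  assumes "F (Suc m) = F 1 * u1 - F 0 * u0" "G (Suc m) = G 1 * u1 - G 0 * u0"
  shows "G (Suc m) * F 0 - F (Suc m) * G 0 = u1 * (F 0 * G 1 - F 1 * G 0)"
    and "G (Suc m) * F 1 - F (Suc m) * G 1 = u0 * (F 0 * G 1 - F 1 * G 0)"
  unfolding assms(1,2) by (simp_all add: algebra_simps)

lemma qrep: "x = of_int (fst (quotient_of x)) / of_int (snd (quotient_of x))"
  by (metis prod.collapse quotient_of_div)

theorem lemma3p3:
  fixes p q :: int and F G :: "nat \<Rightarrow> rat"
  assumes "p > 0" and "q \<ge> 2" and "coprime p q"
    and "\<exists>n. F n \<noteq> 0" and "\<exists>n. G n \<noteq> 0"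
    and "\<And>n. F (n + 2) = (of_int p / of_int q) * F (n + 1) - F n"
    and "\<And>n. G (n + 2) = (of_int p / of_int q) * G (n + 1) - G n"
    and "F 0 * G 1 - F 1 * G 0 \<noteq> 0"
  shows "\<exists>B::int. \<forall>n. gcd (num_of (F n)) (num_of (G n)) \<le> B"
proof -
  have q0: "q \<noteq> 0" using assms(2) by simp
  define a0 where "a0 = fst (quotient_of (F 0))"
  define a0' where "a0' = snd (quotient_of (F 0))"
  define a1 where "a1 = fst (quotient_of (F 1))"
  define a1' where "a1' = snd (quotient_of (F 1))"
  define b0 where "b0 = fst (quotient_of (G 0))"
  define b0' where "b0' = snd (quotient_of (G 0))"
  define b1 where "b1 = fst (quotient_of (G 1))"
  define b1' where "b1' = snd (quotient_of (G 1))"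
  have pos: "a0' > 0" "a1' > 0" "b0' > 0" "b1' > 0"
    unfolding a0'_def a1'_def b0'_def b1'_def by (simp_all add: quotient_of_denom_pos')
  have F0: "F 0 = of_int a0 / of_int a0'" and F1: "F 1 = of_int a1 / of_int a1'"
   and G0: "G 0 = of_int b0 / of_int b0'" and G1: "G 1 = of_int b1 / of_int b1'"
    unfolding a0_def a0'_def a1_def a1'_def b0_def b0'_def b1_def b1'_def by (rule qrep)+
  define N where "N = a0*b1*a1'*b0' - a1*b0*a0'*b1'"
  have WN: "F 0 * G 1 - F 1 * G 0 = of_int N / (of_int a0' * of_int a1' * of_int b0' * of_int b1')"
    unfolding F0 F1 G0 G1 N_def using pos by (simp add: field_simps)
  have N0: "N \<noteq> 0" using WN assms(8) by auto
  define B where "B = max \<bar>q * N\<bar> (gcd (num_of (F 0)) (num_of (G 0)))"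
  have "gcd (num_of (F n)) (num_of (G n)) \<le> B" for n
  proof (cases n)
    case 0 then show ?thesis by (simp add: B_def)
  next
    case (Suc m)
    define f where "f = fst (quotient_of (F (Suc m)))"
    define f' where "f' = snd (quotient_of (F (Suc m)))"
    define g where "g = fst (quotient_of (G (Suc m)))"
    define g' where "g' = snd (quotient_of (G (Suc m)))"
    have fpos: "f' > 0" "g' > 0" unfolding f'_def g'_def by (simp_all add: quotient_of_denom_pos')
    have Fm: "F (Suc m) = of_int f / of_int f'" and Gm: "G (Suc m) = of_int g / of_int g'"
      unfolding f_def f'_def g_def g'_def by (rule qrep)+
    have cf: "coprime f f'" unfolding f_def f'_def by (simp add: quotient_of_coprime)
    have cg: "coprime g g'" unfolding g_def g'_def by (simp add: quotient_of_coprime)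
    define d where "d = gcd f g"
    have dn: "gcd (num_of (F n)) (num_of (G n)) = d"
      unfolding d_def f_def g_def num_of_def Suc by simp
    note RF = rep[OF q0 assms(6), of m]
    note RG = rep[OF q0 assms(7), of m]
    have A: "G (Suc m) * F 0 - F (Suc m) * G 0 = uu p q (Suc m) * (F 0 * G 1 - F 1 * G 0)"
     and B: "G (Suc m) * F 1 - F (Suc m) * G 1 = uu p q m * (F 0 * G 1 - F 1 * G 0)"
      using WA[of F m "uu p q (Suc m)" "uu p q m" G] RF RG by blast+
    have A1: "rat_of_int g / of_int g' * (of_int a0 / of_int a0') - of_int f / of_int f' * (of_int b0 / of_int b0')
        = of_int (cc p q (Suc m)) * of_int q / of_int q ^ (Suc m) * (of_int N / (of_int a0' * of_int a1' * of_int b0' * of_int b1'))"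
      using A[unfolded WN] q0 unfolding Fm Gm F0 G0 uu_def by simp
    have A2: "rat_of_int q ^ (Suc m) * (of_int g * of_int f' * of_int a0 * of_int b0' - of_int f * of_int g' * of_int b0 * of_int a0') * of_int a1' * of_int b1'
       = of_int q * of_int (cc p q (Suc m)) * of_int N * of_int f' * of_int g'"
      by (rule clear_den[OF _ _ _ _ _ _ _ A1]) (use pos fpos q0 in auto)
    have A3: "q ^ (Suc m) * (g * f' * a0 * b0' - f * g' * b0 * a0') * a1' * b1' = q * cc p q (Suc m) * N * f' * g'"
      using A2 by (metis (mono_tags, lifting) of_int_eq_iff of_int_mult of_int_diff of_int_power)
    have B1: "rat_of_int g / of_int g' * (of_int a1 / of_int a1') - of_int f / of_int f' * (of_int b1 / of_int b1')
        = of_int (cc p q m * q) * of_int q / of_int q ^ (Suc m) * (of_int N / (of_int a1' * of_int a0' * of_int b1' * of_int b0'))"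
      using B[unfolded WN] q0 unfolding Fm Gm F1 G1 uu_def by (simp add: field_simps)
    have B2: "rat_of_int q ^ (Suc m) * (of_int g * of_int f' * of_int a1 * of_int b1' - of_int f * of_int g' * of_int b1 * of_int a1') * of_int a0' * of_int b0'
       = of_int q * of_int (cc p q m * q) * of_int N * of_int f' * of_int g'"
      by (rule clear_den[OF _ _ _ _ _ _ _ B1]) (use pos fpos q0 in auto)
    have B3: "q ^ (Suc m) * (g * f' * a1 * b1' - f * g' * b1 * a1') * a0' * b0' = q * (cc p q m * q) * N * f' * g'"
      using B2 by (metis (mono_tags, lifting) of_int_eq_iff of_int_mult of_int_diff of_int_power)
    have df: "d dvd f" and dg: "d dvd g" unfolding d_def by simp_all
    have cdf: "coprime d (f' * g')"
      using cf cg df dg by (meson coprime_divisors coprime_mult_right_iff dvd_refl)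
    have "d dvd q ^ (Suc m) * (g * f' * a0 * b0' - f * g' * b0 * a0') * a1' * b1'"
      using df dg by (simp add: dvd_diff)
    then have "d dvd q * cc p q (Suc m) * N * f' * g'" unfolding A3 .
    then have "d dvd (q * cc p q (Suc m) * N) * (f' * g')" by (simp only: mult.assoc)
    then have d1: "d dvd (q * N) * cc p q (Suc m)" using cdf coprime_dvd_mult_left_iff
      by (metis mult.commute mult.left_commute)
    have "d dvd q ^ (Suc m) * (g * f' * a1 * b1' - f * g' * b1 * a1') * a0' * b0'"
      using df dg by (simp add: dvd_diff)
    then have "d dvd q * (cc p q m * q) * N * f' * g'" unfolding B3 .
    then have "d dvd (q * (cc p q m * q) * N) * (f' * g')" by (simp only: mult.assoc)
    then have d2: "d dvd (q * N) * (q * cc p q m)" using cdf coprime_dvd_mult_left_iff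
      by (metis mult.commute mult.left_commute)
    have cop: "coprime (cc p q (Suc m)) (q * cc p q m)" using cc_cop[OF assms(3), of m] by simp
    have "d dvd gcd ((q * N) * cc p q (Suc m)) ((q * N) * (q * cc p q m))" using d1 d2 by simp
    also have "\<dots> = \<bar>q * N\<bar>" using cop by (simp add: gcd_mult_left coprime_iff_gcd_eq_1)
    finally have "d dvd q * N" by simp
    then have "\<bar>d\<bar> \<le> \<bar>q * N\<bar>" using dvd_imp_le_int N0 q0 by simp
    then show ?thesis unfolding dn B_def by linarith
  qed
  then show ?thesis by blast
qed

end
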